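(* Let $X$ be a nonempty set, $\circ:X\times X\to X$ a binary operation, and $p,q>0$ constants. Let $n\geq 1$ and let $f_1,\dots,f_n:X\to\mathbb{R}$ be $(\circ,p,q)$-convex functions such that \[ 0\leq \max(f_1(x),\dots,f_n(x))\qquad (x\in X). \] Then there exist $\lambda_1,\dots,\lambda_n\geq 0$ with $\lambda_1+\dots+\lambda_n=1$ such that \[ 0\leq \lambda_1 f_1(x)+\dots+\lambda_n f_n(x)\qquad (x\in X). \]
   Context: Given a nonempty set $X$, a binary operation $\circ:X\times X\to X$ and constants $p,q>0$, a function $f:X\to\mathbb{R}$ is called $(\circ,p,q)$-convex if $f(x\circ y)\leq p f(x)+q f(y)$ for all $x,y\in X$. *)

theory Defs
  imports Main "HOL-Analysis.Analysis"
begin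

definition opq_convex :: "'a set \<Rightarrow> ('a \<Rightarrow> 'a \<Rightarrow> 'a) \<Rightarrow> real \<Rightarrow> real \<Rightarrow> ('a \<Rightarrow> real) \<Rightarrow> bool" where
  "opq_convex X op p q f \<longleftrightarrow> (\<forall>x\<in>X. \<forall>y\<in>X. f (op x y) \<le> p * f x + q * f y)"

end

theory Submission
  imports Defs
begin


inductive_set AA :: "real \<Rightarrow> real \<Rightarrow> (real \<times> real) set" for p q :: real where
  AA_1: "(1,0) \<in> AA p q"
| AA_2: "(0,1) \<in> AA p q"
| AA_3: "a \<in> AA p q \<Longrightarrow> b \<in> AA p q \<Longrightarrow>
    (p * fst a + q * fst b, p * snd a + q * snd b) \<in> AA p q"

lemma AA_nonneg:
  assumes "a \<in> AA p q" "p > 0" "q > 0"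
  shows "fst a \<ge> 0 \<and> snd a \<ge> 0 \<and> fst a + snd a > 0"
  using assms
proof induction
  case (AA_3 a b)
  have "p * (fst a + snd a) > 0" "q * (fst b + snd b) > 0" using AA_3 by auto
  moreover have "p * fst a \<ge> 0" "q * fst b \<ge> 0" "p * snd a \<ge> 0" "q * snd b \<ge> 0" using AA_3 by auto
  ultimately show ?case by (simp add: algebra_simps)
qed auto

lemma AA_sum1:
  assumes "a \<in> AA p q" "p + q = 1"
  shows "fst a + snd a = 1"
  using assms
proof induction
  case (AA_3 a b)
  have "p * fst a + q * fst b + (p * snd a + q * snd b) = p * (fst a + snd a) + q * (fst b + snd b)"
    by (simp add: algebra_simps)
  then show ?case using AA_3 by simp
qed auto

lemma AA_scale:
  assumes "a \<in> AA p q"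
  shows "((p+q)^k * fst a, (p+q)^k * snd a) \<in> AA p q"
proof (induction k)
  case 0
  then show ?case using assms by simp
next
  case (Suc k)
  have "((p+q)^Suc k * fst a, (p+q)^Suc k * snd a) =
     (p * fst ((p+q)^k * fst a, (p+q)^k * snd a) + q * fst ((p+q)^k * fst a, (p+q)^k * snd a),
      p * snd ((p+q)^k * fst a, (p+q)^k * snd a) + q * snd ((p+q)^k * fst a, (p+q)^k * snd a))"
    by (simp add: algebra_simps)
  then show ?case using AA_3[OF Suc.IH Suc.IH] by simp
qed

lemma E0:
  fixes c P Q :: real
  assumes "c > 1" "P > 0" "P \<le> Q"
  shows "\<exists>n. Q \<le> P * c^n \<and> P * c^n \<le> c * Q"
proof -
  obtain n0 where "Q / P < c ^ n0" using real_arch_pow[OF assms(1)] by blast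
  then have ex: "\<exists>n. Q \<le> P * c^n" using assms by (auto simp: field_simps intro!: exI[of _ n0])
  define n where "n = (LEAST n. Q \<le> P * c^n)"
  have n1: "Q \<le> P * c^n" unfolding n_def by (rule LeastI_ex[OF ex])
  show ?thesis
  proof (cases n)
    case 0
    then have "Q = P" using n1 assms by simp
    then show ?thesis using n1 assms 0 by (intro exI[of _ n]) auto
  next
    case (Suc m)
    have "\<not> Q \<le> P * c^m" using not_less_Least[of m "\<lambda>n. Q \<le> P * c^n"] Suc unfolding n_def by auto
    then have "P * c^m < Q" by simp
    then have "c * (P * c^m) \<le> c * Q" using assms by simp
    then show ?thesis using n1 Suc by (intro exI[of _ n]) (simp add: algebra_simps)
  qed
qed

lemma E1:
  fixes c P Q :: real
  assumes "c > 1" "P > 0" "Q > 0"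
  shows "\<exists>j k. P * c^j \<le> c * (Q * c^k) \<and> Q * c^k \<le> c * (P * c^j)"
proof (cases "P \<le> Q")
  case True
  then obtain n where "Q \<le> P * c^n \<and> P * c^n \<le> c * Q" using E0[OF assms(1,2)] by blast
  moreover have "1 * (P * c^n) \<le> c * (P * c^n)" using assms by (intro mult_right_mono) auto
  ultimately show ?thesis by (rule_tac exI[of _ n], rule_tac exI[of _ 0]) auto
next
  case False
  then obtain n where "P \<le> Q * c^n \<and> Q * c^n \<le> c * P" using E0[OF assms(1,3)] by fastforce
  moreover have "1 * (Q * c^n) \<le> c * (Q * c^n)" using assms by (intro mult_right_mono) auto
  ultimately show ?thesis by (rule_tac exI[of _ 0], rule_tac exI[of _ n]) auto
qed

lemma gap:
  fixes D :: "real set"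
  assumes D0: "0 \<in> D" and D1: "1 \<in> D" and th0: "th0 > 0"
    and mix: "\<And>x y. x \<in> D \<Longrightarrow> y \<in> D \<Longrightarrow> \<exists>th. th0 \<le> th \<and> th \<le> 1 - th0 \<and> th * x + (1 - th) * y \<in> D"
    and t: "0 \<le> t" "t \<le> 1" and e: "e > 0"
  shows "\<exists>x\<in>D. \<bar>x - t\<bar> < e"
proof (rule ccontr)
  assume "\<not> ?thesis"
  then have H: "\<And>x. x \<in> D \<Longrightarrow> \<bar>x - t\<bar> \<ge> e" by force
  define L where "L = {x\<in>D. x \<le> t}"
  define R where "R = {x\<in>D. t \<le> x}"
  have L0: "0 \<in> L" using D0 t unfolding L_def by auto
  have R1: "1 \<in> R" using D1 t unfolding R_def by auto
  have bL: "bdd_above L" unfolding L_def by (rule bdd_aboveI[of _ t]) auto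
  have bR: "bdd_below R" unfolding R_def by (rule bdd_belowI[of _ t]) auto
  define c where "c = Sup L"
  define d where "d = Inf R"
  have "c \<le> t - e" unfolding c_def
  proof (rule cSup_least)
    show "L \<noteq> {}" using L0 by auto
  next
    fix x assume "x \<in> L" then show "x \<le> t - e" using H unfolding L_def by force
  qed
  have "d \<ge> t + e" unfolding d_def
  proof (rule cInf_greatest)
    show "R \<noteq> {}" using R1 by auto
  next
    fix x assume "x \<in> R" then show "t + e \<le> x" using H unfolding R_def by force
  qed
  define g where "g = d - c"
  have g: "g > 0" unfolding g_def using \<open>c \<le> t - e\<close> \<open>d \<ge> t + e\<close> e by linarith
  define dl where "dl = th0 * g / 2"
  have dl: "dl > 0" unfolding dl_def using g th0 by simp
  obtain c' where c': "c' \<in> L" "c - dl < c'"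
    using less_cSup_iff[of L "c - dl"] L0 bL dl unfolding c_def by force
  obtain d' where d': "d' \<in> R" "d' < d + dl"
    using cInf_less_iff[of R "d + dl"] R1 bR dl unfolding d_def by force
  have c'c: "c' \<le> c" unfolding c_def using cSup_upper[OF c'(1) bL] .
  have dd': "d \<le> d'" unfolding d_def using cInf_lower[OF d'(1) bR] .
  have "c' \<in> D" "d' \<in> D" using c' d' unfolding L_def R_def by auto
  then obtain th where th: "th0 \<le> th" "th \<le> 1 - th0" and mD: "th * c' + (1 - th) * d' \<in> D"
    using mix by blast
  define m where "m = th * c' + (1 - th) * d'"
  have th_pos: "th > 0" using th th0 by linarith
  have th_le: "th \<le> 1" using th th0 by linarith
  have a1: "th * (c' - c) > th * (- dl)" using c' th_pos by (intro mult_strict_left_mono) auto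
  have a2: "th * (- dl) \<ge> - dl" using th_le dl by (simp add: mult_le_cancel_right1)
  have a3: "(1 - th) * (d' - c) \<ge> th0 * g"
    using th dd' g th0 unfolding g_def by (intro mult_mono) auto
  have "m - c = th * (c' - c) + (1 - th) * (d' - c)" unfolding m_def by (simp add: algebra_simps)
  moreover have "th0 * g = 2 * dl" unfolding dl_def by simp
  ultimately have mc: "m > c" using a1 a2 a3 dl by linarith
  have b1: "(1 - th) * (d - d') > (1 - th) * (- dl)"
    using d' th th0 by (intro mult_strict_left_mono) auto
  have b2: "(1 - th) * (- dl) \<ge> - dl" using th th0 dl by (simp add: mult_le_cancel_right1)
  have b3: "th * (d - c') \<ge> th0 * g"
    using th c'c g th0 unfolding g_def by (intro mult_mono) auto
  have "d - m = th * (d - c') + (1 - th) * (d - d')" unfolding m_def by (simp add: algebra_simps)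
  moreover have "th0 * g = 2 * dl" unfolding dl_def by simp
  ultimately have md: "m < d" using b1 b2 b3 dl by linarith
  show False
  proof (cases "m \<le> t")
    case True
    then have "m \<in> L" using mD unfolding L_def m_def by auto
    then have "m \<le> c" unfolding c_def using cSup_upper[OF _ bL] by blast
    then show False using mc by simp
  next
    case False
    then have "m \<in> R" using mD unfolding R_def m_def by auto
    then have "d \<le> m" unfolding d_def using cInf_lower[OF _ bR] by blast
    then show False using md by simp
  qed
qed



definition dirr :: "real \<times> real \<Rightarrow> real" where
  "dirr a = fst a / (fst a + snd a)"

lemma scales:
  assumes p: "p > 0" and q: "q > 0" and a: "a \<in> AA p q" and b: "b \<in> AA p q"
    and K: "K = max (max (p/q) (q/p)) (max (p+q) (1/(p+q)))"
  shows "\<exists>s t. s > 0 \<and> t > 0 \<and> (s * fst a, s * snd a) \<in> AA p q \<and> (t * fst b, t * snd b) \<in> AA p q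
     \<and> p * s * (fst a + snd a) \<le> K * (q * t * (fst b + snd b))
     \<and> q * t * (fst b + snd b) \<le> K * (p * s * (fst a + snd a))"
proof -
  define P where "P = p * (fst a + snd a)"
  define Q where "Q = q * (fst b + snd b)"
  have P: "P > 0" unfolding P_def using AA_nonneg[OF a p q] p by simp
  have Q: "Q > 0" unfolding Q_def using AA_nonneg[OF b p q] q by simp
  have Kc1: "p + q \<le> K" "1/(p+q) \<le> K" "p/q \<le> K" "q/p \<le> K" unfolding K by auto
  consider "p + q = 1" | "p + q > 1" | "p + q < 1" by linarith
  then show ?thesis
  proof cases
    case 1
    have "fst a + snd a = 1" "fst b + snd b = 1" using AA_sum1 a b 1 by auto
    moreover have "p \<le> K * q" using Kc1(3) q by (simp add: field_simps)
    moreover have "q \<le> K * p" using Kc1(4) p by (simp add: field_simps)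
    ultimately show ?thesis using a b by (rule_tac exI[of _ 1], rule_tac exI[of _ 1]) auto
  next
    case 2
    obtain j k where jk: "P * (p+q)^j \<le> (p+q) * (Q * (p+q)^k)" "Q * (p+q)^k \<le> (p+q) * (P * (p+q)^j)"
      using E1[OF 2 P Q] by blast
    have "(p+q) * (Q * (p+q)^k) \<le> K * (Q * (p+q)^k)" using Kc1(1) Q p q by (intro mult_right_mono) auto
    moreover have "(p+q) * (P * (p+q)^j) \<le> K * (P * (p+q)^j)" using Kc1(1) P p q by (intro mult_right_mono) auto
    ultimately show ?thesis using jk AA_scale[OF a, of j] AA_scale[OF b, of k] p q
      by (rule_tac exI[of _ "(p+q)^j"], rule_tac exI[of _ "(p+q)^k"]) (auto simp: P_def Q_def algebra_simps)
  next
    case 3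
    define c where "c = 1 / (p+q)"
    have c1: "c > 1" unfolding c_def using 3 p q by simp
    obtain j k where jk: "P * c^j \<le> c * (Q * c^k)" "Q * c^k \<le> c * (P * c^j)"
      using E1[OF c1 P Q] by blast
    have pq: "p + q > 0" using p q by simp
    have e1: "P * (p+q)^k \<le> c * (Q * (p+q)^j)"
    proof -
      have "P * c^j * ((p+q)^j * (p+q)^k) \<le> c * (Q * c^k) * ((p+q)^j * (p+q)^k)"
        using jk(1) pq by (intro mult_right_mono) auto
      moreover have "c^j * (p+q)^j = 1" "c^k * (p+q)^k = 1" unfolding c_def using pq
        by (simp_all add: power_one_over)
      ultimately show ?thesis by (simp add: algebra_simps) (metis mult.assoc mult.left_commute mult_1_right)
    qed
    have e2: "Q * (p+q)^j \<le> c * (P * (p+q)^k)"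
    proof -
      have "Q * c^k * ((p+q)^j * (p+q)^k) \<le> c * (P * c^j) * ((p+q)^j * (p+q)^k)"
        using jk(2) pq by (intro mult_right_mono) auto
      moreover have "c^j * (p+q)^j = 1" "c^k * (p+q)^k = 1" unfolding c_def using pq
        by (simp_all add: power_one_over)
      ultimately show ?thesis by (simp add: algebra_simps) (metis mult.assoc mult.left_commute mult_1_right)
    qed
    have "c * (Q * (p+q)^j) \<le> K * (Q * (p+q)^j)" using Kc1(2) Q pq unfolding c_def by (intro mult_right_mono) auto
    moreover have "c * (P * (p+q)^k) \<le> K * (P * (p+q)^k)" using Kc1(2) P pq unfolding c_def by (intro mult_right_mono) auto
    ultimately show ?thesis using e1 e2 AA_scale[OF a, of k] AA_scale[OF b, of j] p q
      by (rule_tac exI[of _ "(p+q)^k"], rule_tac exI[of _ "(p+q)^j"]) (auto simp: P_def Q_def algebra_simps)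
  qed
qed



lemma mix_id:
  fixes A B u v P Q :: real
  assumes "A > 0" "B > 0" "P + Q > 0" "P = u * A" "Q = v * B"
  shows "(u * a1 + v * b1) / (P + Q) = P / (P + Q) * (a1 / A) + (1 - P / (P + Q)) * (b1 / B)"
proof -
  have h1: "1 - P / (P + Q) = Q / (P + Q)" using assms(3) by (simp add: field_simps)
  have h2: "P / (P + Q) * (a1 / A) = (u * a1) / (P + Q)" using assms by simp
  have h3: "Q / (P + Q) * (b1 / B) = (v * b1) / (P + Q)" using assms by simp
  show ?thesis unfolding h1 h2 h3 by (simp add: add_divide_distrib)
qed

lemma dens:
  assumes p: "p > 0" and q: "q > 0" and t: "0 \<le> t1" "t1 < t2" "t2 \<le> 1"
  shows "\<exists>a\<in>AA p q. t1 * (fst a + snd a) < fst a \<and> fst a < t2 * (fst a + snd a)"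
proof -
  define K where "K = max (max (p/q) (q/p)) (max (p+q) (1/(p+q)))"
  have K0: "K > 0" unfolding K_def using p q by (simp add: less_max_iff_disj)
  define D where "D = dirr ` AA p q"
  have D0: "0 \<in> D" unfolding D_def dirr_def by (rule image_eqI[of _ _ "(0,1)"]) (auto intro: AA_2)
  have D1: "1 \<in> D" unfolding D_def dirr_def by (rule image_eqI[of _ _ "(1,0)"]) (auto intro: AA_1)
  have mix: "\<exists>th. 1/(1+K) \<le> th \<and> th \<le> 1 - 1/(1+K) \<and> th * x + (1 - th) * y \<in> D"
    if x: "x \<in> D" and y: "y \<in> D" for x y
  proof -
    obtain a where a: "a \<in> AA p q" "x = dirr a" using x unfolding D_def by auto
    obtain b where b: "b \<in> AA p q" "y = dirr b" using y unfolding D_def by auto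
    obtain s t where st: "s > 0" "t > 0" "(s * fst a, s * snd a) \<in> AA p q" "(t * fst b, t * snd b) \<in> AA p q"
      "p * s * (fst a + snd a) \<le> K * (q * t * (fst b + snd b))"
      "q * t * (fst b + snd b) \<le> K * (p * s * (fst a + snd a))"
      using scales[OF p q a(1) b(1) K_def] by blast
    have na: "fst a \<ge> 0" "snd a \<ge> 0" "fst a + snd a > 0" using AA_nonneg[OF a(1) p q] by auto
    have nb: "fst b \<ge> 0" "snd b \<ge> 0" "fst b + snd b > 0" using AA_nonneg[OF b(1) p q] by auto
    define P where "P = p * s * (fst a + snd a)"
    define Q where "Q = q * t * (fst b + snd b)"
    have P: "P > 0" unfolding P_def using na p st by simp
    have Q: "Q > 0" unfolding Q_def using nb q st by simp
    have PQ: "P \<le> K * Q" "Q \<le> K * P" using st unfolding P_def Q_def by auto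
    define c where "c = (p * fst (s * fst a, s * snd a) + q * fst (t * fst b, t * snd b),
                         p * snd (s * fst a, s * snd a) + q * snd (t * fst b, t * snd b))"
    have c: "c \<in> AA p q" unfolding c_def by (rule AA_3[OF st(3) st(4)])
    define th where "th = P / (P + Q)"
    have "fst c + snd c = P + Q" unfolding c_def P_def Q_def by (simp add: algebra_simps)
    then have "dirr c = (p * s * fst a + q * t * fst b) / (P + Q)" unfolding dirr_def c_def by simp
    also have "\<dots> = th * x + (1 - th) * y" unfolding th_def a(2) b(2) dirr_def
      by (rule mix_id[OF na(3) nb(3)]) (use P Q in \<open>auto simp: P_def Q_def\<close>)
    finally have cD: "th * x + (1 - th) * y \<in> D" using c unfolding D_def by (metis image_eqI)
    have "1/(1+K) \<le> th" unfolding th_def using P Q K0 PQ by (simp add: field_simps)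
    moreover have "th \<le> 1 - 1/(1+K)" unfolding th_def using P Q K0 PQ by (simp add: field_simps)
    ultimately show ?thesis using cD by blast
  qed
  obtain x where x: "x \<in> D" "\<bar>x - (t1+t2)/2\<bar> < (t2-t1)/2"
    using gap[OF D0 D1 _ mix, of "(t1+t2)/2" "(t2-t1)/2"] K0 t by auto
  obtain a where a: "a \<in> AA p q" "x = dirr a" using x unfolding D_def by auto
  have na: "fst a + snd a > 0" using AA_nonneg[OF a(1) p q] by auto
  have "t1 < x" "x < t2" using x(2) by (simp_all add: abs_less_iff field_simps)
  then show ?thesis using a na unfolding dirr_def by (intro bexI[of _ a]) (auto simp: field_simps)
qed



lemma AA_gen:
  assumes "a \<in> AA p q" and p: "p > 0" and q: "q > 0"
    and cl: "\<And>x y. x \<in> Y \<Longrightarrow> y \<in> Y \<Longrightarrow> op x y \<in> Y"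
    and cf: "opq_convex Y op p q f" and cg: "opq_convex Y op p q g"
    and xy: "x \<in> Y" "y \<in> Y"
  shows "\<exists>z\<in>Y. f z \<le> fst a * f x + snd a * f y \<and> g z \<le> fst a * g x + snd a * g y"
  using assms(1)
proof induction
  case AA_1 then show ?case using xy by auto
next
  case AA_2 then show ?case using xy by auto
next
  case (AA_3 a b)
  obtain za where za: "za \<in> Y" "f za \<le> fst a * f x + snd a * f y" "g za \<le> fst a * g x + snd a * g y"
    using AA_3 by blast
  obtain zb where zb: "zb \<in> Y" "f zb \<le> fst b * f x + snd b * f y" "g zb \<le> fst b * g x + snd b * g y"
    using AA_3 by blast
  have "f (op za zb) \<le> p * f za + q * f zb" using cf za zb unfolding opq_convex_def by blast
  also have "\<dots> \<le> p * (fst a * f x + snd a * f y) + q * (fst b * f x + snd b * f y)"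
    using za zb p q by (intro add_mono mult_left_mono) auto
  also have "\<dots> = (p * fst a + q * fst b) * f x + (p * snd a + q * snd b) * f y"
    by (simp add: algebra_simps)
  finally have F: "f (op za zb) \<le> (p * fst a + q * fst b) * f x + (p * snd a + q * snd b) * f y" .
  have "g (op za zb) \<le> p * g za + q * g zb" using cg za zb unfolding opq_convex_def by blast
  also have "\<dots> \<le> p * (fst a * g x + snd a * g y) + q * (fst b * g x + snd b * g y)"
    using za zb p q by (intro add_mono mult_left_mono) auto
  also have "\<dots> = (p * fst a + q * fst b) * g x + (p * snd a + q * snd b) * g y"
    by (simp add: algebra_simps)
  finally have G: "g (op za zb) \<le> (p * fst a + q * fst b) * g x + (p * snd a + q * snd b) * g y" .
  show ?case using F G cl[OF za(1) zb(1)] by auto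
qed

lemma pair_ineq:
  assumes p: "p > 0" and q: "q > 0"
    and cl: "\<And>x y. x \<in> Y \<Longrightarrow> y \<in> Y \<Longrightarrow> op x y \<in> Y"
    and cf: "opq_convex Y op p q f" and cg: "opq_convex Y op p q g"
    and mx: "\<And>z. z \<in> Y \<Longrightarrow> 0 \<le> f z \<or> 0 \<le> g z"
    and x: "x \<in> Y" "f x < 0" and y: "y \<in> Y" "g y < 0"
  shows "g y * f x \<le> g x * f y"
proof (rule ccontr)
  assume "\<not> ?thesis"
  then have C: "g x * f y < g y * f x" by simp
  have gx: "g x \<ge> 0" using mx x by force
  have fy: "f y \<ge> 0" using mx y by force
  define t1 where "t1 = f y / (f y - f x)"
  define t2 where "t2 = (if g x = 0 then 1 else - g y / (g x - g y))"
  have d1: "f y - f x > 0" using x fy by simp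
  have d2: "g x - g y > 0" using y gx by simp
  have t1: "0 \<le> t1" unfolding t1_def using d1 fy by simp
  have t2: "t2 \<le> 1" unfolding t2_def using d2 gx by (simp add: field_simps)
  have t12: "t1 < t2"
  proof (cases "g x = 0")
    case True
    then show ?thesis unfolding t1_def t2_def using d1 x by (simp add: field_simps)
  next
    case False
    have "f y * (g x - g y) < - g y * (f y - f x)" using C by (simp add: algebra_simps)
    then show ?thesis unfolding t1_def t2_def using False d1 d2 by (simp add: field_simps)
  qed
  obtain a where a: "a \<in> AA p q" "t1 * (fst a + snd a) < fst a" "fst a < t2 * (fst a + snd a)"
    using dens[OF p q t1 t12 t2] by blast
  have na: "fst a \<ge> 0" "snd a \<ge> 0" "fst a + snd a > 0" using AA_nonneg[OF a(1) p q] by auto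
  obtain z where z: "z \<in> Y" "f z \<le> fst a * f x + snd a * f y" "g z \<le> fst a * g x + snd a * g y"
    using AA_gen[OF a(1) p q cl cf cg x(1) y(1)] by blast
  have "t1 * (fst a + snd a) * (f y - f x) < fst a * (f y - f x)"
    using a(2) d1 by (rule mult_strict_right_mono)
  moreover have "t1 * (f y - f x) = f y" unfolding t1_def using d1 by simp
  moreover have "t1 * (fst a + snd a) * (f y - f x) = (fst a + snd a) * (t1 * (f y - f x))"
    by (simp only: mult_ac)
  ultimately have "(fst a + snd a) * f y < fst a * (f y - f x)" by simp
  moreover have "fst a * f x + snd a * f y = (fst a + snd a) * f y - fst a * (f y - f x)"
    by (simp add: algebra_simps)
  ultimately have f1: "fst a * f x + snd a * f y < 0" by linarith
  have f2: "fst a * g x + snd a * g y < 0"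
  proof (cases "g x = 0")
    case True
    then have "snd a > 0" using a(3) unfolding t2_def by simp
    then show ?thesis using True y by (simp add: mult_pos_neg)
  next
    case False
    have "fst a * (g x - g y) < t2 * (fst a + snd a) * (g x - g y)"
      using a(3) d2 by (rule mult_strict_right_mono)
    moreover have "t2 * (g x - g y) = - g y" unfolding t2_def using False d2 by simp
    moreover have "t2 * (fst a + snd a) * (g x - g y) = (t2 * (g x - g y)) * (fst a + snd a)"
      by (simp only: mult_ac)
    ultimately have "fst a * (g x - g y) < - g y * (fst a + snd a)" by simp
    moreover have "fst a * g x + snd a * g y = fst a * (g x - g y) - (- g y * (fst a + snd a))"
      by (simp add: algebra_simps)
    ultimately show ?thesis by linarith
  qed
  show False using mx[OF z(1)] z f1 f2 by linarith
qed



lemma two_case: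
  assumes p: "p > 0" and q: "q > 0"
    and cl: "\<And>x y. x \<in> Y \<Longrightarrow> y \<in> Y \<Longrightarrow> op x y \<in> Y"
    and cf: "opq_convex Y op p q f" and cg: "opq_convex Y op p q g"
    and mx: "\<And>z. z \<in> Y \<Longrightarrow> 0 \<le> f z \<or> 0 \<le> g z"
  shows "\<exists>lam. 0 \<le> lam \<and> lam \<le> 1 \<and> (\<forall>x\<in>Y. 0 \<le> lam * f x + (1 - lam) * g x)"
proof -
  define B where "B = {y\<in>Y. g y < 0}"
  define S where "S = insert 0 ((\<lambda>y. - g y / (f y - g y)) ` B)"
  define lam where "lam = Sup S"
  have Sne: "S \<noteq> {}" unfolding S_def by simp
  have S1: "s \<le> 1" if sS: "s \<in> S" for s
  proof -
    consider "s = 0" | y where "y \<in> B" "s = - g y / (f y - g y)" using sS unfolding S_def by blast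
    then show ?thesis
    proof cases
      case 2
      have "f y \<ge> 0" "g y < 0" using mx 2 unfolding B_def by force+
      then have d: "f y - g y > 0" by simp
      show ?thesis unfolding 2(2) by (subst pos_divide_le_eq[OF d]) (use \<open>f y \<ge> 0\<close> in simp)
    qed simp
  qed
  have bS: "bdd_above S" using S1 by (intro bdd_aboveI) auto
  have l0: "0 \<le> lam" unfolding lam_def using cSup_upper[OF _ bS] S_def by auto
  have l1: "lam \<le> 1" unfolding lam_def using cSup_least[OF Sne] S1 by auto
  have "0 \<le> lam * f x + (1 - lam) * g x" if x: "x \<in> Y" for x
  proof (cases "g x < 0")
    case True
    then have fx: "f x \<ge> 0" using mx x by force
    have d: "f x - g x > 0" using True fx by simp
    have "- g x / (f x - g x) \<in> S" using True x unfolding S_def B_def by auto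
    then have "- g x / (f x - g x) \<le> lam" unfolding lam_def using cSup_upper[OF _ bS] by blast
    then have "- g x \<le> lam * (f x - g x)" using d by (simp add: field_simps)
    then show ?thesis by (simp add: algebra_simps)
  next
    case False
    show ?thesis
    proof (cases "f x < 0")
      case fneg: True
      have d: "g x - f x > 0" using False fneg by simp
      have "lam \<le> g x / (g x - f x)" unfolding lam_def
      proof (rule cSup_least[OF Sne])
        fix s assume "s \<in> S"
        then consider "s = 0" | y where "y \<in> B" "s = - g y / (f y - g y)" unfolding S_def by blast
        then show "s \<le> g x / (g x - f x)"
        proof cases
          case 1 then show ?thesis using False d by simp
        next
          case 2
          have y: "y \<in> Y" "g y < 0" using 2 unfolding B_def by auto
          have fy: "f y \<ge> 0" using mx y by force
          have "g y * f x \<le> g x * f y" using pair_ineq[OF p q cl cf cg mx x fneg y] .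
          then have "- g y * (g x - f x) \<le> g x * (f y - g y)" by (simp add: algebra_simps)
          then have ineq: "- g y * (g x - f x) \<le> g x * (f y - g y)" .
          have dy: "f y - g y > 0" using y fy by simp
          have e1: "- g y / (f y - g y) = (- g y * (g x - f x)) / ((f y - g y) * (g x - f x))"
            using d by simp
          have e2: "g x / (g x - f x) = (g x * (f y - g y)) / ((f y - g y) * (g x - f x))"
            using dy by simp
          have "(- g y * (g x - f x)) / ((f y - g y) * (g x - f x)) \<le> (g x * (f y - g y)) / ((f y - g y) * (g x - f x))"
            by (rule divide_right_mono[OF ineq]) (use d dy in simp)
          then show ?thesis unfolding 2(2) e1 e2 .
        qed
      qed
      then have "lam * (g x - f x) \<le> g x" using d by (simp add: field_simps)
      then show ?thesis by (simp add: algebra_simps)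
    next
      case fpos: False
      then show ?thesis using False l0 l1 by simp
    qed
  qed
  then show ?thesis using l0 l1 by blast
qed



lemma comb_convex:
  assumes "opq_convex Y op p q f" "opq_convex Y op p q g" "0 \<le> lam" "lam \<le> 1"
  shows "opq_convex Y op p q (\<lambda>x. lam * f x + (1 - lam) * g x)"
  unfolding opq_convex_def
proof (intro ballI)
  fix x y assume xy: "x \<in> Y" "y \<in> Y"
  have "lam * f (op x y) + (1 - lam) * g (op x y) \<le> lam * (p * f x + q * f y) + (1 - lam) * (p * g x + q * g y)"
    using assms xy unfolding opq_convex_def by (intro add_mono mult_left_mono) auto
  also have "\<dots> = p * (lam * f x + (1 - lam) * g x) + q * (lam * f y + (1 - lam) * g y)"
    by (simp add: algebra_simps)
  finally show "lam * f (op x y) + (1 - lam) * g (op x y) \<le> p * (lam * f x + (1 - lam) * g x) + q * (lam * f y + (1 - lam) * g y)" .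
qed

lemma main_ind:
  assumes p: "p > 0" and q: "q > 0"
  shows "\<And>f Y. (\<And>x y. x \<in> Y \<Longrightarrow> y \<in> Y \<Longrightarrow> op x y \<in> Y) \<Longrightarrow>
    (\<And>i. i < Suc m \<Longrightarrow> opq_convex Y op p q (f i)) \<Longrightarrow>
    (\<And>x. x \<in> Y \<Longrightarrow> \<exists>i<Suc m. 0 \<le> f i x) \<Longrightarrow>
    \<exists>l :: nat \<Rightarrow> real. (\<forall>i<Suc m. l i \<ge> 0) \<and> (\<Sum>i<Suc m. l i) = 1 \<and>
           (\<forall>x\<in>Y. 0 \<le> (\<Sum>i<Suc m. l i * f i x))"
proof (induction m)
  case 0
  then show ?case by (rule_tac exI[of _ "\<lambda>_. 1"]) auto
next
  case (Suc m)
  note cl = Suc.prems(1)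
  define Y' where "Y' = {x\<in>Y. \<forall>i<m. f i x < 0}"
  have cl': "op x y \<in> Y'" if "x \<in> Y'" "y \<in> Y'" for x y
  proof -
    have "f i (op x y) < 0" if i: "i < m" for i
    proof -
      have "f i (op x y) \<le> p * f i x + q * f i y"
        using Suc.prems(2)[of i] i \<open>x \<in> Y'\<close> \<open>y \<in> Y'\<close> unfolding opq_convex_def Y'_def by auto
      moreover have "p * f i x < 0" "q * f i y < 0" using \<open>x \<in> Y'\<close> \<open>y \<in> Y'\<close> i p q
        unfolding Y'_def by (auto simp: mult_pos_neg)
      ultimately show ?thesis by linarith
    qed
    then show ?thesis using cl that unfolding Y'_def by auto
  qed
  have conv': "opq_convex Y' op p q (f i)" if "i < Suc (Suc m)" for i
    using Suc.prems(2)[OF that] unfolding opq_convex_def Y'_def by auto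
  have mx': "0 \<le> f m z \<or> 0 \<le> f (Suc m) z" if z: "z \<in> Y'" for z
  proof -
    obtain i where i: "i < Suc (Suc m)" "0 \<le> f i z" using Suc.prems(3)[of z] z unfolding Y'_def by auto
    have "\<not> i < m" using i z unfolding Y'_def by force
    then have "i = m \<or> i = Suc m" using i by linarith
    then show ?thesis using i by auto
  qed
  obtain lam where lam: "0 \<le> lam" "lam \<le> 1" "\<forall>x\<in>Y'. 0 \<le> lam * f m x + (1 - lam) * f (Suc m) x"
    using two_case[OF p q cl' conv'[of m] conv'[of "Suc m"] mx'] by auto
  define h where "h = f(m := (\<lambda>x. lam * f m x + (1 - lam) * f (Suc m) x))"
  have hc: "opq_convex Y op p q (h i)" if "i < Suc m" for i
  proof (cases "i = m")
    case True
    then show ?thesis unfolding h_def using comb_convex[OF Suc.prems(2) Suc.prems(2) lam(1,2)] by simp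
  next
    case False
    then show ?thesis unfolding h_def using Suc.prems(2) that by simp
  qed
  have hm: "\<exists>i<Suc m. 0 \<le> h i x" if x: "x \<in> Y" for x
  proof (cases "x \<in> Y'")
    case True
    then show ?thesis using lam(3) unfolding h_def by (intro exI[of _ m]) auto
  next
    case False
    then obtain i where "i < m" "0 \<le> f i x" using x unfolding Y'_def by force
    then show ?thesis unfolding h_def by (intro exI[of _ i]) auto
  qed
  obtain mu where mu: "\<forall>i<Suc m. mu i \<ge> 0" "(\<Sum>i<Suc m. mu i) = 1" "\<forall>x\<in>Y. 0 \<le> (\<Sum>i<Suc m. mu i * h i x)"
    using Suc.IH[OF cl hc hm] by blast
  define l where "l = mu(m := mu m * lam, Suc m := mu m * (1 - lam))"
  have l1: "\<forall>i<Suc (Suc m). l i \<ge> 0"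
  proof (intro allI impI)
    fix i assume "i < Suc (Suc m)"
    then consider "i < m" | "i = m" | "i = Suc m" by linarith
    then show "l i \<ge> 0" using mu(1) lam unfolding l_def by cases auto
  qed
  have sl: "(\<Sum>i<m. l i) = (\<Sum>i<m. mu i)" unfolding l_def by (intro sum.cong) auto
  have l2: "(\<Sum>i<Suc (Suc m). l i) = 1"
  proof -
    have "(\<Sum>i<Suc (Suc m). l i) = (\<Sum>i<m. l i) + l m + l (Suc m)" by simp
    also have "\<dots> = (\<Sum>i<m. mu i) + mu m" unfolding sl l_def by (simp add: algebra_simps)
    also have "\<dots> = 1" using mu(2) by simp
    finally show ?thesis .
  qed
  have l3: "0 \<le> (\<Sum>i<Suc (Suc m). l i * f i x)" if x: "x \<in> Y" for x
  proof -
    have sl2: "(\<Sum>i<m. l i * f i x) = (\<Sum>i<m. mu i * h i x)" unfolding l_def h_def by (intro sum.cong) auto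
    have "(\<Sum>i<Suc (Suc m). l i * f i x) = (\<Sum>i<m. l i * f i x) + l m * f m x + l (Suc m) * f (Suc m) x" by simp
    also have "\<dots> = (\<Sum>i<m. mu i * h i x) + mu m * h m x" unfolding sl2 l_def h_def by (simp add: algebra_simps)
    also have "\<dots> = (\<Sum>i<Suc m. mu i * h i x)" by simp
    finally show ?thesis using mu(3) x by simp
  qed
  show ?case using l1 l2 l3 by blast
qed

theorem theorem3p3:
  fixes X :: "'a set" and op :: "'a \<Rightarrow> 'a \<Rightarrow> 'a" and p q :: real
    and n :: nat and f :: "nat \<Rightarrow> 'a \<Rightarrow> real"
  assumes "X \<noteq> {}"
    and "\<And>x y. x \<in> X \<Longrightarrow> y \<in> X \<Longrightarrow> op x y \<in> X"
    and "p > 0" and "q > 0"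
    and "n \<ge> 1"
    and "\<And>i. i < n \<Longrightarrow> opq_convex X op p q (f i)"
    and "\<And>x. x \<in> X \<Longrightarrow> 0 \<le> Max ((\<lambda>i. f i x) ` {..<n})"
  shows "\<exists>l :: nat \<Rightarrow> real. (\<forall>i<n. l i \<ge> 0) \<and> (\<Sum>i<n. l i) = 1 \<and>
           (\<forall>x\<in>X. 0 \<le> (\<Sum>i<n. l i * f i x))"
proof -
  obtain m where m: "n = Suc m" using assms(5) by (cases n) auto
  have ex: "\<exists>i<Suc m. 0 \<le> f i x" if "x \<in> X" for x
  proof -
    have "0 \<le> Max ((\<lambda>i. f i x) ` {..<n})" using assms(7) that .
    then show ?thesis unfolding m by (subst (asm) Max_ge_iff) auto
  qed
  show ?thesis unfolding m
    by (rule main_ind[where op = op, OF assms(3,4)]) (use assms(2) assms(6) ex in \<open>auto simp: m\<close>)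
qed


end
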